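(* Fix an integer $m\ge 3$ and a finite complete graph $K$ on at least $m$ vertices. Set \[ \mathcal{O}=\max_{\nu\in\Delta^K}\bigl(2m\cdot\beta(\nu;C_m)+\beta(\nu;P_{m+1})\bigr). \] If $\mu\in\Delta^K$ achieves $\mathcal{O}$, then for all $x\in V(K)$, \[ \frac{m}{2}\bar\mu(x)+\bigl(1-\bar\mu(x)\bigr)^m+\frac{1}{2\mathcal{O}}\cdot\bar\mu(x)\Bigl(\frac{1-\bar\mu(x)}{m-1}\Bigr)^{m-1}\ge 1. \]
   Context: $C_m$ is the cycle on $m$ vertices and $P_{m+1}$ the path on $m+1$ vertices. $\Delta^K$ is the set of probability measures on $E(K)$. For $\mu\in\Delta^K$ and a subgraph $H'\subseteq K$, $\mu(H')=\prod_{e\in E(H')}\mu(e)$; $\beta(\mu;H)=\sum_{H'}\mu(H')$ over all subgraphs $H'$ of $K$ isomorphic to $H$; and $\bar\mu(x)=\sum_{y\in V(K)\setminus\{x\}}\mu(xy)$. *)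

theory Defs
  imports Complex_Main
begin

definition edges :: "'a set \<Rightarrow> 'a set set" where
  "edges V = {e. e \<subseteq> V \<and> card e = 2}"

definition Delta :: "'a set \<Rightarrow> ('a set \<Rightarrow> real) set" where
  "Delta V = {\<mu>. (\<forall>e\<in>edges V. 0 \<le> \<mu> e) \<and> (\<Sum>e\<in>edges V. \<mu> e) = 1}"

text \<open>Edge sets of subgraphs of K isomorphic to the cycle C_m (vertices f 0, ..., f (m-1)).
  Since C_m has no isolated vertices, such a subgraph is determined by its edge set.\<close>
definition cycle_copies :: "'a set \<Rightarrow> nat \<Rightarrow> 'a set set set" where
  "cycle_copies V m = {{{f i, f ((i + 1) mod m)} | i. i < m} | f.
      inj_on f {0..<m} \<and> f ` {0..<m} \<subseteq> V}"

definition path_copies :: "'a set \<Rightarrow> nat \<Rightarrow> 'a set set set" where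
  "path_copies V m = {{{f i, f (i + 1)} | i. i < m} | f.
      inj_on f {0..m} \<and> f ` {0..m} \<subseteq> V}"

definition weight :: "('a set \<Rightarrow> real) \<Rightarrow> 'a set set \<Rightarrow> real" where
  "weight \<mu> H = (\<Prod>e\<in>H. \<mu> e)"

definition beta_cycle :: "'a set \<Rightarrow> nat \<Rightarrow> ('a set \<Rightarrow> real) \<Rightarrow> real" where
  "beta_cycle V m \<mu> = (\<Sum>H\<in>cycle_copies V m. weight \<mu> H)"

definition beta_path :: "'a set \<Rightarrow> nat \<Rightarrow> ('a set \<Rightarrow> real) \<Rightarrow> real" where
  "beta_path V m \<mu> = (\<Sum>H\<in>path_copies V m. weight \<mu> H)"

definition objective :: "'a set \<Rightarrow> nat \<Rightarrow> ('a set \<Rightarrow> real) \<Rightarrow> real" where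
  "objective V m \<nu> = 2 * real m * beta_cycle V m \<nu> + beta_path V m \<nu>"

definition mubar :: "'a set \<Rightarrow> ('a set \<Rightarrow> real) \<Rightarrow> 'a \<Rightarrow> real" where
  "mubar V \<mu> x = (\<Sum>y\<in>V - {x}. \<mu> {x, y})"

end

theory Submission
  imports Defs
begin


lemma edges_split:
  assumes "finite W" "y \<in> W"
  shows "edges W = edges (W - {y}) \<union> (\<lambda>v. {y, v}) ` (W - {y})"
    and "edges (W - {y}) \<inter> (\<lambda>v. {y, v}) ` (W - {y}) = {}"
    and "inj_on (\<lambda>v. {y, v}) (W - {y})"
    and "{e \<in> edges W. y \<in> e} = (\<lambda>v. {y, v}) ` (W - {y})"
proof -
  show "edges W = edges (W - {y}) \<union> (\<lambda>v. {y, v}) ` (W - {y})"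
  proof (intro equalityI subsetI)
    fix e assume e: "e \<in> edges W"
    then obtain a b where ab: "a \<noteq> b" "e = {a, b}" unfolding edges_def
      by (auto simp: card_2_iff)
    show "e \<in> edges (W - {y}) \<union> (\<lambda>v. {y, v}) ` (W - {y})"
      using e ab assms by (auto simp: edges_def insert_commute)
  next
    fix e assume "e \<in> edges (W - {y}) \<union> (\<lambda>v. {y, v}) ` (W - {y})"
    then show "e \<in> edges W" using assms by (auto simp: edges_def)
  qed
  show "edges (W - {y}) \<inter> (\<lambda>v. {y, v}) ` (W - {y}) = {}"
    by (auto simp: edges_def)
  show "inj_on (\<lambda>v. {y, v}) (W - {y})"
    by (auto simp: inj_on_def doubleton_eq_iff)
  show "{e \<in> edges W. y \<in> e} = (\<lambda>v. {y, v}) ` (W - {y})"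
  proof (intro equalityI subsetI)
    fix e assume e: "e \<in> {e \<in> edges W. y \<in> e}"
    then obtain a b where ab: "a \<noteq> b" "e = {a, b}" unfolding edges_def
      by (auto simp: card_2_iff)
    show "e \<in> (\<lambda>v. {y, v}) ` (W - {y})"
      using e ab assms by (auto simp: edges_def insert_commute)
  next
    fix e assume "e \<in> (\<lambda>v. {y, v}) ` (W - {y})"
    then show "e \<in> {e \<in> edges W. y \<in> e}" using assms by (auto simp: edges_def)
  qed
qed

lemma finite_edges: "finite W \<Longrightarrow> finite (edges W)"
  unfolding edges_def by (rule finite_subset[of _ "Pow W"]) auto

definition mass :: "('a set \<Rightarrow> real) \<Rightarrow> 'a set \<Rightarrow> real" where
  "mass \<nu> W = (\<Sum>e\<in>edges W. \<nu> e)"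

lemma mass_split:
  assumes "finite W" "y \<in> W"
  shows "mass \<nu> W = mass \<nu> (W - {y}) + (\<Sum>v\<in>W - {y}. \<nu> {y, v})"
proof -
  have "mass \<nu> W = mass \<nu> (W - {y}) + sum \<nu> ((\<lambda>v. {y, v}) ` (W - {y}))"
    unfolding mass_def edges_split(1)[OF assms]
    by (rule sum.union_disjoint) (use assms edges_split(2)[OF assms] in \<open>auto intro: finite_edges\<close>)
  also have "sum \<nu> ((\<lambda>v. {y, v}) ` (W - {y})) = (\<Sum>v\<in>W - {y}. \<nu> {y, v})"
    by (subst sum.reindex[OF edges_split(3)[OF assms]]) simp
  finally show ?thesis .
qed

lemma amgm:
  fixes d M :: real and k :: nat
  assumes "0 \<le> d" "0 \<le> M"
  shows "d * (M / k) ^ k \<le> ((d + M) / (k + 1)) ^ (k + 1)"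
proof (cases "k = 0 \<or> M = 0")
  case True
  then show ?thesis using assms by (auto simp: power_0_left)
next
  case False
  define a where "a = M / k"
  have a: "a > 0" using False assms by (auto simp: a_def)
  define z where "z = (d - a) / ((k + 1) * a)"
  have pos: "(k+1)*a > 0" using a by simp
  have "0 \<le> a * real k" using a by simp
  moreover have "real (k+1)*a = a*real k + a" by (simp add: algebra_simps)
  ultimately have "-((k+1)*a) \<le> d - a" using a assms by linarith
  then have z: "-1 \<le> z" using pos unfolding z_def by (simp add: le_divide_eq)
  have "1 + real (k + 1) * z \<le> (1 + z) ^ (k + 1)" by (rule Bernoulli_inequality[OF z])
  moreover have "1 + real (k + 1) * z = d / a"
  proof -
    have "real (k + 1) * z = (d - a) / a" unfolding z_def using a
      by (simp del: of_nat_Suc of_nat_add)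
    then show ?thesis using a by (simp add: field_simps)
  qed
  moreover have "1 + z = ((d + M) / (k + 1)) / a"
  proof -
    have kaM: "real k * a = M" using False by (simp add: a_def)
    have "1 + z = (1 * ((k+1)*a) + (d - a)) / ((k+1)*a)" unfolding z_def using pos
      by (subst add_divide_eq_iff) auto
    also have "1 * ((k+1)*a) + (d - a) = d + M" using kaM by (simp add: algebra_simps)
    finally show ?thesis by (simp add: divide_divide_eq_left mult.commute)
  qed
  ultimately have "d / a \<le> (((d + M) / (k + 1)) / a) ^ (k + 1)" by simp
  then have "d / a \<le> ((d + M) / (k + 1)) ^ (k + 1) / a ^ (k + 1)" by (simp only: power_divide)
  moreover have apos: "a ^ (k+1) > 0" using a by simp
  ultimately have "d / a * a ^ (k+1) \<le> ((d + M) / (k + 1)) ^ (k + 1)"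
    by (simp only: le_divide_eq)
  moreover have "d / a * a ^ (k+1) = d * a ^ k" using a by simp
  ultimately show ?thesis by (simp add: a_def)
qed

fun Q :: "('a set \<Rightarrow> real) \<Rightarrow> 'a set \<Rightarrow> 'a \<Rightarrow> nat \<Rightarrow> real" where
  "Q \<nu> W y 0 = 1"
| "Q \<nu> W y (Suc k) = (\<Sum>v\<in>W - {y}. \<nu> {y, v} * Q \<nu> (W - {y}) v k)"

lemma mass_nonneg: "finite W \<Longrightarrow> \<forall>e\<in>edges W. 0 \<le> \<nu> e \<Longrightarrow> 0 \<le> mass \<nu> W"
  unfolding mass_def by (rule sum_nonneg) auto

lemma edges_mono: "A \<subseteq> B \<Longrightarrow> edges A \<subseteq> edges B"
  unfolding edges_def by auto

lemma Q_bound: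
  assumes "finite W" "y \<in> W" "\<forall>e\<in>edges W. 0 \<le> \<nu> e"
  shows "Q \<nu> W y k \<le> (mass \<nu> W / k) ^ k"
  using assms
proof (induction k arbitrary: W y)
  case 0
  then show ?case by simp
next
  case (Suc k)
  let ?W = "W - {y}"
  have nn: "\<forall>e\<in>edges ?W. 0 \<le> \<nu> e" using Suc.prems edges_mono[of ?W W] by auto
  have ev: "0 \<le> \<nu> {y, v}" if "v \<in> ?W" for v
    using Suc.prems that edges_split(1)[OF Suc.prems(1,2)] by auto
  have "Q \<nu> W y (Suc k) = (\<Sum>v\<in>?W. \<nu> {y, v} * Q \<nu> ?W v k)" by simp
  also have "\<dots> \<le> (\<Sum>v\<in>?W. \<nu> {y, v} * (mass \<nu> ?W / k) ^ k)"
    by (rule sum_mono, rule mult_left_mono) (use Suc.IH Suc.prems nn ev in auto)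
  also have "\<dots> = (\<Sum>v\<in>?W. \<nu> {y, v}) * (mass \<nu> ?W / k) ^ k"
    by (simp add: sum_distrib_right)
  also have "\<dots> \<le> (((\<Sum>v\<in>?W. \<nu> {y, v}) + mass \<nu> ?W) / (k + 1)) ^ (k + 1)"
    by (rule amgm) (use ev mass_nonneg[OF _ nn] Suc.prems in \<open>auto intro!: sum_nonneg\<close>)
  also have "(\<Sum>v\<in>?W. \<nu> {y, v}) + mass \<nu> ?W = mass \<nu> W"
    using mass_split[OF Suc.prems(1,2)] by simp
  finally show ?case by simp
qed

fun pw :: "('a set \<Rightarrow> real) \<Rightarrow> 'a list \<Rightarrow> real" where
  "pw \<nu> (a # b # r) = \<nu> {a, b} * pw \<nu> (b # r)"
| "pw \<nu> _ = 1"

fun pe :: "'a list \<Rightarrow> 'a set set" where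
  "pe (a # b # r) = insert {a, b} (pe (b # r))"
| "pe _ = {}"

lemma pe_sub: "e \<in> pe l \<Longrightarrow> e \<subseteq> set l"
  by (induction l rule: pe.induct) auto

lemma finite_pe: "finite (pe l)"
  by (induction l rule: pe.induct) auto

lemma weight_pe: "distinct l \<Longrightarrow> weight \<nu> (pe l) = pw \<nu> l"
proof (induction l rule: pe.induct)
  case (1 a b r)
  have "{a, b} \<notin> pe (b # r)" using 1(2) pe_sub[of "{a,b}" "b # r"] by auto
  then show ?case using 1 by (simp add: weight_def finite_pe)
qed (auto simp: weight_def)

lemma pe_nth: "pe l = {{l ! i, l ! Suc i} | i. Suc i < length l}"
proof (induction l rule: pe.induct)
  case (1 a b r)
  show ?case
  proof (intro equalityI subsetI)
    fix e assume "e \<in> pe (a # b # r)"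
    then consider "e = {a, b}" | "e \<in> pe (b # r)" by auto
    then show "e \<in> {{(a # b # r) ! i, (a # b # r) ! Suc i} | i. Suc i < length (a # b # r)}"
    proof cases
      case 1 then show ?thesis by (auto intro!: exI[of _ 0])
    next
      case 2
      then obtain i where "e = {(b # r) ! i, (b # r) ! Suc i}" "Suc i < length (b # r)"
        using "1.IH" by auto
      then show ?thesis by (auto intro!: exI[of _ "Suc i"])
    qed
  next
    fix e assume "e \<in> {{(a # b # r) ! i, (a # b # r) ! Suc i} | i. Suc i < length (a # b # r)}"
    then obtain i where i: "e = {(a # b # r) ! i, (a # b # r) ! Suc i}" "Suc i < length (a # b # r)"
      by auto
    show "e \<in> pe (a # b # r)"
    proof (cases i)
      case 0 then show ?thesis using i by simp
    next
      case (Suc j)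
      then have "e \<in> pe (b # r)" using i "1.IH" by auto
      then show ?thesis by simp
    qed
  qed
qed auto

definition dl :: "'a set \<Rightarrow> nat \<Rightarrow> 'a list set" where
  "dl W k = {ys. distinct ys \<and> length ys = k \<and> set ys \<subseteq> W}"

lemma finite_dl: "finite W \<Longrightarrow> finite (dl W k)"
  unfolding dl_def
  by (rule finite_subset[OF _ finite_lists_length_eq[of W k]]) auto

lemma dl_Suc: "dl W (Suc k) = (\<lambda>(v, zs). v # zs) ` (SIGMA v:W. dl (W - {v}) k)"
  unfolding dl_def
  apply (rule set_eqI)
  apply (auto simp: length_Suc_conv)
  subgoal for y ys by (rule image_eqI[of _ _ "(y, ys)"]) auto
  done

lemma sum_dl_Q:
  assumes "finite W"
  shows "(\<Sum>ys\<in>dl (W - {y}) k. pw \<nu> (y # ys)) = Q \<nu> W y k"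
  using assms
proof (induction k arbitrary: W y)
  case 0
  have "dl (W - {y}) 0 = {[]}" unfolding dl_def by auto
  then show ?case by simp
next
  case (Suc k)
  have inj: "inj_on (\<lambda>(v, zs). v # zs) (SIGMA v:W - {y}. dl (W - {y} - {v}) k)"
    by (auto simp: inj_on_def)
  have "(\<Sum>ys\<in>dl (W - {y}) (Suc k). pw \<nu> (y # ys))
      = (\<Sum>(v, zs)\<in>(SIGMA v:W - {y}. dl (W - {y} - {v}) k). pw \<nu> (y # v # zs))"
    unfolding dl_Suc by (subst sum.reindex[OF inj]) (simp add: case_prod_unfold)
  also have "\<dots> = (\<Sum>v\<in>W - {y}. \<Sum>zs\<in>dl (W - {y} - {v}) k. pw \<nu> (y # v # zs))"
    by (rule sum.Sigma[symmetric]) (auto intro!: finite_dl simp: Suc.prems)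
  also have "\<dots> = (\<Sum>v\<in>W - {y}. \<nu> {y, v} * Q \<nu> (W - {y}) v k)"
    by (rule sum.cong[OF refl]) (simp add: sum_distrib_left[symmetric] Suc.IH Suc.prems)
  finally show ?case by simp
qed



definition cnt :: "'a \<Rightarrow> 'a set set \<Rightarrow> nat" where
  "cnt x H = card (H \<inter> {e. x \<in> e})"

lemma setbuild_image: "{g i | i. i < m} = g ` {..<m}" by auto

lemma setb_cong: "(\<And>i. i < m \<Longrightarrow> g i = h i) \<Longrightarrow> {g i | i. i < m} = {h i | i. i < m}"
  unfolding setbuild_image by (rule image_cong) auto

lemma nth_mu: "i \<le> m \<Longrightarrow> map g [0..<Suc m] ! i = g i"
  by (subst nth_map_upt) auto

lemma Suc_mod_cases: "j < m \<Longrightarrow> Suc j mod m = (if Suc j = m then 0 else Suc j)"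
  by (cases "Suc j = m") auto

lemma two_le_cnt:
  assumes "finite H" "e1 \<in> H" "e2 \<in> H" "x \<in> e1" "x \<in> e2" "e1 \<noteq> e2"
  shows "2 \<le> cnt x H"
proof -
  have "{e1, e2} \<subseteq> H \<inter> {e. x \<in> e}" using assms by auto
  from card_mono[OF _ this] assms show ?thesis by (simp add: cnt_def)
qed

context
  fixes m :: nat and f :: "nat \<Rightarrow> 'a" and V :: "'a set"
  assumes m3: "3 \<le> m" and inj: "inj_on f {0..<m}" and fV: "f ` {0..<m} \<subseteq> V"
begin


lemma cyc_sub_edges: "{{f i, f (Suc i mod m)} | i. i < m} \<subseteq> edges V"
proof
  fix e assume "e \<in> {{f i, f (Suc i mod m)} | i. i < m}"
  then obtain i where i: "i < m" "e = {f i, f (Suc i mod m)}" by auto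
  have si: "Suc i mod m < m" "Suc i mod m \<noteq> i" using i m3 by (auto simp: Suc_mod_cases)
  then have "f i \<noteq> f (Suc i mod m)" using inj i by (auto simp: inj_on_def)
  then show "e \<in> edges V" using i si fV by (auto simp: edges_def)
qed

lemma cyc_card: "card {{f i, f (Suc i mod m)} | i. i < m} = m"
proof -
  have "inj_on (\<lambda>i. {f i, f (Suc i mod m)}) {..<m}"
  proof (rule inj_onI)
    fix i j assume ij: "i \<in> {..<m}" "j \<in> {..<m}" "{f i, f (Suc i mod m)} = {f j, f (Suc j mod m)}"
    have si: "Suc i mod m < m" "Suc j mod m < m" using ij m3 by auto
    from ij(3) consider "f i = f j" | "f i = f (Suc j mod m)" "f (Suc i mod m) = f j"
      by (auto simp: doubleton_eq_iff)
    then show "i = j"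
    proof cases
      case 1 then show ?thesis using inj ij by (auto simp: inj_on_def)
    next
      case 2
      then have "i = Suc j mod m" "Suc i mod m = j" using inj ij si by (auto simp: inj_on_def)
      then show ?thesis using ij m3 by (auto simp: Suc_mod_cases split: if_splits)
    qed
  qed
  then show ?thesis unfolding setbuild_image by (simp add: card_image)
qed

lemma cyc_cnt:
  assumes H: "H = {{f i, f (Suc i mod m)} | i. i < m}"
  shows "cnt x H \<noteq> 1"
proof
  assume c1: "cnt x H = 1"
  have fin: "finite H" unfolding H setbuild_image by simp
  have "H \<inter> {e. x \<in> e} \<noteq> {}" using c1 by (auto simp: cnt_def)
  then obtain e where "e \<in> H" "x \<in> e" by blast
  then obtain i where i: "i < m" "x = f i \<or> x = f (Suc i mod m)" unfolding H by blast
  moreover have "Suc i mod m < m" using m3 by simp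
  ultimately obtain j where j: "j < m" "x = f j" by blast
  define p where "p = (if j = 0 then m - 1 else j - 1)"
  have p1: "p < m" "p \<noteq> j" using j m3 by (auto simp: p_def)
  have p2: "Suc p mod m = j" using j m3 by (cases "j = 0") (auto simp: p_def)
  have p3: "Suc j mod m \<noteq> p" "Suc j mod m \<noteq> j"
    using j m3 by (cases "j = 0"; cases "Suc j = m"; simp add: p_def)+
  have p4: "Suc j mod m < m" using m3 by simp
  have e1: "{f j, f (Suc j mod m)} \<in> H" unfolding H using j(1) by blast
  have e2: "{f p, f j} \<in> H" unfolding H using p1(1) p2 by force
  have ne: "f (Suc j mod m) \<noteq> f p" "f p \<noteq> f j" "f (Suc j mod m) \<noteq> f j"
    using inj_onD[OF inj, of "Suc j mod m" p] inj_onD[OF inj, of p j] inj_onD[OF inj, of "Suc j mod m" j]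
      p1 p3 p4 j by auto
  then have "{f j, f (Suc j mod m)} \<noteq> {f p, f j}" by (auto simp: doubleton_eq_iff)
  then have "2 \<le> cnt x H" by (rule two_le_cnt[OF fin e1 e2, rotated 2]) (use j in auto)
  then show False using c1 by simp
qed

end

context
  fixes m :: nat and f :: "nat \<Rightarrow> 'a" and V :: "'a set"
  assumes m1: "1 \<le> m" and inj: "inj_on f {0..m}" and fV: "f ` {0..m} \<subseteq> V"
begin

lemma fne: "a \<le> m \<Longrightarrow> b \<le> m \<Longrightarrow> a \<noteq> b \<Longrightarrow> f a \<noteq> f b"
  using inj_onD[OF inj, of a b] by auto

lemma path_sub_edges: "{{f i, f (i + 1)} | i. i < m} \<subseteq> edges V"
proof
  fix e assume "e \<in> {{f i, f (i + 1)} | i. i < m}"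
  then obtain i where i: "i < m" "e = {f i, f (i + 1)}" by auto
  then have "f i \<noteq> f (i + 1)" using inj_onD[OF inj, of i "i+1"] by auto
  then show "e \<in> edges V" using i fV by (auto simp: edges_def)
qed

lemma path_card: "card {{f i, f (i + 1)} | i. i < m} = m"
proof -
  have "inj_on (\<lambda>i. {f i, f (i + 1)}) {..<m}"
  proof (rule inj_onI)
    fix i j assume ij: "i \<in> {..<m}" "j \<in> {..<m}" "{f i, f (i + 1)} = {f j, f (j + 1)}"
    from ij(3) consider "f i = f j" | "f i = f (j + 1)" "f (i + 1) = f j"
      by (auto simp: doubleton_eq_iff)
    then show "i = j"
    proof cases
      case 1 then show ?thesis using inj_onD[OF inj, of i j] ij by auto
    next
      case 2
      then have "i = j + 1" "i + 1 = j" using inj_onD[OF inj, of i "j+1"] inj_onD[OF inj, of "i+1" j] ij by auto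
      then show ?thesis by simp
    qed
  qed
  then show ?thesis unfolding setbuild_image by (simp add: card_image)
qed

lemma path_cnt1:
  assumes H: "H = {{f i, f (i + 1)} | i. i < m}" and c1: "cnt x H = 1"
  shows "\<exists>ys\<in>dl (V - {x}) m. H = pe (x # ys)"
proof -
  have fin: "finite H" unfolding H setbuild_image by simp
  have "H \<inter> {e. x \<in> e} \<noteq> {}" using c1 by (auto simp: cnt_def)
  then obtain e where "e \<in> H" "x \<in> e" by blast
  then obtain i where i: "i < m" "x = f i \<or> x = f (i + 1)" unfolding H by blast
  then obtain j where j: "j \<le> m" "x = f j" using less_imp_le Suc_leI by (metis Suc_eq_plus1)
  have "j = 0 \<or> j = m"
  proof (rule ccontr)
    assume "\<not> (j = 0 \<or> j = m)"
    then have jj: "0 < j" "j < m" using j by auto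
    have e1: "{f j, f (j + 1)} \<in> H" using jj unfolding H by blast
    have e2: "{f (j - 1), f j} \<in> H" unfolding H using jj by (intro CollectI exI[of _ "j - 1"]) auto
    have "f (j + 1) \<noteq> f (j - 1)" "f (j - 1) \<noteq> f j" "f (j + 1) \<noteq> f j"
      using jj fne[of "j+1" "j-1"] fne[of "j-1" j] fne[of "j+1" j] by auto
    then have "{f j, f (j + 1)} \<noteq> {f (j - 1), f j}" by (auto simp: doubleton_eq_iff)
    then have "2 \<le> cnt x H" by (rule two_le_cnt[OF fin e1 e2, rotated 2]) (use j in auto)
    then show False using c1 by simp
  qed
  then show ?thesis
  proof
    assume j0: "j = 0"
    define ys where "ys = map f [1..<Suc m]"
    have l: "x # ys = map f [0..<Suc m]" using j j0 by (simp add: ys_def upt_rec)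
    have injS: "inj_on f (set [0..<Suc m])" unfolding set_upt
      using inj atLeastLessThanSuc_atLeastAtMost by metis
    have d: "distinct (x # ys)" unfolding l using injS by (simp add: distinct_map)
    have "set ys \<subseteq> V" using fV by (auto simp: ys_def)
    then have ys: "ys \<in> dl (V - {x}) m" using d by (auto simp: dl_def ys_def)
    have "pe (x # ys) = {{map f [0..<Suc m] ! i, map f [0..<Suc m] ! Suc i} | i. i < m}"
      unfolding l pe_nth by (simp del: upt_Suc)
    also have "\<dots> = H" unfolding H
      by (rule setb_cong) (simp add: nth_mu del: upt_Suc)
    finally show ?thesis using ys by auto
  next
    assume jm: "j = m"
    define g where "g i = f (m - i)" for i
    define ys where "ys = map g [1..<Suc m]"
    have l: "x # ys = map g [0..<Suc m]" using j jm by (simp add: ys_def upt_rec g_def)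
    have injS: "inj_on g (set [0..<Suc m])"
    proof (rule inj_onI)
      fix a b assume "a \<in> set [0..<Suc m]" "b \<in> set [0..<Suc m]" "g a = g b"
      then show "a = b" using inj_onD[OF inj, of "m - a" "m - b"] by (auto simp: g_def)
    qed
    have d: "distinct (x # ys)" unfolding l using injS by (simp add: distinct_map)
    have "set ys \<subseteq> V" using fV by (auto simp: ys_def g_def)
    then have ys: "ys \<in> dl (V - {x}) m" using d by (auto simp: dl_def ys_def)
    have "pe (x # ys) = {{map g [0..<Suc m] ! i, map g [0..<Suc m] ! Suc i} | i. i < m}"
      unfolding l pe_nth by (simp del: upt_Suc)
    also have "\<dots> = {{g i, g (Suc i)} | i. i < m}"
      by (rule setb_cong) (simp add: nth_mu del: upt_Suc)
    also have "\<dots> = H" unfolding H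
    proof (intro equalityI subsetI)
      fix e assume "e \<in> {{g i, g (Suc i)} | i. i < m}"
      then obtain i where i: "i < m" "e = {g i, g (Suc i)}" by auto
      then have "e = {f (m - Suc i), f (m - Suc i + 1)}" by (auto simp: g_def Suc_diff_Suc)
      then show "e \<in> {{f i, f (i + 1)} | i. i < m}" using i
        by (intro CollectI exI[of _ "m - Suc i"] conjI) auto
    next
      fix e assume "e \<in> {{f i, f (i + 1)} | i. i < m}"
      then obtain i where i: "i < m" "e = {f i, f (i + 1)}" by auto
      then have "e = {g (m - Suc i), g (Suc (m - Suc i))}" by (auto simp: g_def Suc_diff_Suc)
      then show "e \<in> {{g i, g (Suc i)} | i. i < m}" using i
        by (intro CollectI exI[of _ "m - Suc i"] conjI) auto
    qed
    finally show ?thesis using ys by auto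
  qed
qed

end


lemma pe_edges: "distinct l \<Longrightarrow> set l \<subseteq> W \<Longrightarrow> pe l \<subseteq> edges W"
  by (induction l rule: pe.induct) (auto simp: edges_def)

definition mut :: "'a \<Rightarrow> ('a set \<Rightarrow> real) \<Rightarrow> real \<Rightarrow> 'a set \<Rightarrow> real" where
  "mut x \<mu> t e = (if x \<in> e then (1 + t) * \<mu> e else \<mu> e)"

lemma weight_mut:
  assumes "finite H"
  shows "weight (mut x \<mu> t) H = (1 + t) ^ cnt x H * weight \<mu> H"
proof -
  have "weight (mut x \<mu> t) H = prod (\<lambda>e. (1 + t) * \<mu> e) (H \<inter> {e. x \<in> e}) * prod \<mu> (H \<inter> - {e. x \<in> e})"
    unfolding weight_def mut_def by (rule prod.If_cases[OF assms])
  also have "\<dots> = (1 + t) ^ cnt x H * (prod \<mu> (H \<inter> {e. x \<in> e}) * prod \<mu> (H \<inter> - {e. x \<in> e}))"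
    by (simp add: prod.distrib cnt_def)
  also have "prod \<mu> (H \<inter> {e. x \<in> e}) * prod \<mu> (H \<inter> - {e. x \<in> e}) = weight \<mu> H"
    unfolding weight_def using prod.If_cases[OF assms, of "\<lambda>e. x \<in> e" \<mu> \<mu>] by simp
  finally show ?thesis .
qed

lemma weight_div:
  assumes "finite H"
  shows "weight (\<lambda>e. g e / s) H = weight g H / s ^ card H"
  unfolding weight_def by (simp add: prod_dividef)

lemma cycle_copiesE:
  assumes "H \<in> cycle_copies V m"
  obtains f where "inj_on f {0..<m}" "f ` {0..<m} \<subseteq> V" "H = {{f i, f (Suc i mod m)} | i. i < m}"
  using assms unfolding cycle_copies_def by auto

lemma path_copiesE:
  assumes "H \<in> path_copies V m"
  obtains f where "inj_on f {0..m}" "f ` {0..m} \<subseteq> V" "H = {{f i, f (i + 1)} | i. i < m}"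
  using assms unfolding path_copies_def by auto

theorem lemma4p5:
  fixes V :: "'a set" and m :: nat and \<mu> :: "'a set \<Rightarrow> real" and x :: 'a
  assumes "m \<ge> 3"
    and "finite V" and "card V \<ge> m"
    and "\<mu> \<in> Delta V"
    and "\<forall>\<nu>\<in>Delta V. objective V m \<nu> \<le> objective V m \<mu>"
    and "x \<in> V"
  shows "real m / 2 * mubar V \<mu> x + (1 - mubar V \<mu> x) ^ m
           + 1 / (2 * objective V m \<mu>) * mubar V \<mu> x
             * ((1 - mubar V \<mu> x) / (real m - 1)) ^ (m - 1) \<ge> 1"
proof -
  note m3 = assms(1) and finV = assms(2) and xV = assms(6)
  define C where "C = cycle_copies V m"
  define P where "P = path_copies V m"
  define b where "b = mubar V \<mu> x"
  define Ob where "Ob = objective V m \<mu>"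
  define X where "X = ((1 - b) / (real m - 1)) ^ (m - 1)"
  have mu_nn: "\<And>e. e \<in> edges V \<Longrightarrow> 0 \<le> \<mu> e" and mu_sum: "(\<Sum>e\<in>edges V. \<mu> e) = 1"
    using assms(4) by (auto simp: Delta_def)
  have finE: "finite (edges V)" using finite_edges[OF finV] .
  have Cprops: "H \<subseteq> edges V \<and> card H = m \<and> cnt x H \<noteq> 1" if hC: "H \<in> C" for H
  proof -
    obtain f where f: "inj_on f {0..<m}" "f ` {0..<m} \<subseteq> V" "H = {{f i, f (Suc i mod m)} | i. i < m}"
      using cycle_copiesE[OF hC[unfolded C_def]] by blast
    have a: "H \<subseteq> edges V" using cyc_sub_edges[OF m3 f(1,2)] unfolding f(3)[symmetric] .
    have b: "card H = m" using cyc_card[OF m3 f(1,2)] unfolding f(3)[symmetric] .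
    show ?thesis using a b cyc_cnt[OF m3 f(1,2) f(3)] by blast
  qed
  have Pprops: "H \<subseteq> edges V \<and> card H = m \<and> (cnt x H = 1 \<longrightarrow> (\<exists>ys\<in>dl (V - {x}) m. H = pe (x # ys)))"
    if hP: "H \<in> P" for H
  proof -
    obtain f where f: "inj_on f {0..m}" "f ` {0..m} \<subseteq> V" "H = {{f i, f (i + 1)} | i. i < m}"
      using path_copiesE[OF hP[unfolded P_def]] by blast
    have m1: "1 \<le> m" using m3 by simp
    have a: "H \<subseteq> edges V" using path_sub_edges[OF m1 f(1,2)] unfolding f(3)[symmetric] .
    have b: "card H = m" using path_card[OF m1 f(1,2)] unfolding f(3)[symmetric] .
    show ?thesis using a b path_cnt1[OF m1 f(1,2) f(3)] by blast
  qed
  have finH: "finite H" if "H \<in> C \<union> P" for H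
  proof -
    have "card H = m" using that Cprops Pprops by blast
    then show ?thesis using m3 card.infinite[of H] by (cases "finite H") auto
  qed
  have finC: "finite C" using Cprops finE by (intro finite_subset[of C "Pow (edges V)"]) auto
  have finP: "finite P" using Pprops finE by (intro finite_subset[of P "Pow (edges V)"]) auto
  have wnn: "0 \<le> weight \<mu> H" if "H \<subseteq> edges V" for H
    unfolding weight_def using that mu_nn by (auto intro!: prod_nonneg)
  have Ob_def': "Ob = (\<Sum>H\<in>C. 2 * real m * weight \<mu> H) + (\<Sum>H\<in>P. weight \<mu> H)"
    unfolding Ob_def objective_def beta_cycle_def beta_path_def C_def P_def by (simp add: sum_distrib_left)
  have bsum: "sum \<mu> (edges V \<inter> {e. x \<in> e}) = b"
  proof -
    have "edges V \<inter> {e. x \<in> e} = (\<lambda>v. {x, v}) ` (V - {x})"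
      using edges_split(4)[OF finV xV] by auto
    then show ?thesis unfolding b_def mubar_def
      by (simp add: sum.reindex[OF edges_split(3)[OF finV xV]])
  qed
  have b_nn: "0 \<le> b" using bsum mu_nn by (metis IntD1 sum_nonneg)
  have sum_split: "sum \<mu> (edges V \<inter> {e. x \<in> e}) + sum \<mu> (edges V \<inter> - {e. x \<in> e}) = 1"
    using mu_sum prod.If_cases sum.If_cases[OF finE, of "\<lambda>e. x \<in> e" \<mu> \<mu>] by simp
  have rest_nn: "0 \<le> sum \<mu> (edges V \<inter> - {e. x \<in> e})" using mu_nn by (auto intro!: sum_nonneg)
  have b_le: "b \<le> 1" using sum_split rest_nn bsum by linarith
  define G where "G t = (\<Sum>H\<in>C. 2 * real m * ((1 + t) ^ cnt x H * weight \<mu> H))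
                       + (\<Sum>H\<in>P. (1 + t) ^ cnt x H * weight \<mu> H)" for t
  have obj_scaled: "objective V m (\<lambda>e. mut x \<mu> t e / s) = G t / s ^ m" for t s
  proof -
    have c: "weight (\<lambda>e. mut x \<mu> t e / s) H = (1 + t) ^ cnt x H * weight \<mu> H / s ^ m"
      if "H \<in> C \<union> P" for H
      using weight_div[OF finH[OF that]] weight_mut[OF finH[OF that]] Cprops Pprops that by auto
    show ?thesis unfolding objective_def beta_cycle_def beta_path_def G_def C_def[symmetric] P_def[symmetric]
      using c by (simp add: sum_divide_distrib sum_distrib_left add_divide_distrib)
  qed
  have G_le: "G t \<le> (1 + t * b) ^ m * Ob" if t: "-1 \<le> t" and pos: "0 < 1 + t * b" for t
  proof -
    define \<nu> where "\<nu> e = mut x \<mu> t e / (1 + t * b)" for e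
    have "\<nu> \<in> Delta V"
    proof -
      have "0 \<le> \<nu> e" if "e \<in> edges V" for e
        using mu_nn[OF that] t pos by (auto simp: \<nu>_def mut_def)
      moreover have "(\<Sum>e\<in>edges V. mut x \<mu> t e) = 1 + t * b"
      proof -
        have "(\<Sum>e\<in>edges V. mut x \<mu> t e) = (\<Sum>e\<in>edges V \<inter> {e. x \<in> e}. (1 + t) * \<mu> e) + sum \<mu> (edges V \<inter> - {e. x \<in> e})"
          unfolding mut_def by (rule sum.If_cases[OF finE])
        also have "\<dots> = (1 + t) * b + (1 - b)" using bsum sum_split by (simp add: sum_distrib_left[symmetric])
        finally show ?thesis by (simp add: algebra_simps)
      qed
      ultimately show ?thesis using pos unfolding Delta_def \<nu>_def by (simp add: sum_divide_distrib[symmetric])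
    qed
    then have "objective V m \<nu> \<le> Ob" using assms(5) Ob_def by auto
    moreover have "objective V m \<nu> = G t / (1 + t * b) ^ m" unfolding \<nu>_def by (rule obj_scaled)
    ultimately show ?thesis using pos by (simp add: divide_le_eq mult.commute)
  qed
  have G0: "G 0 = Ob" unfolding G_def Ob_def' by simp
  define D where "D = (\<Sum>H\<in>C. 2 * real m * (real (cnt x H) * weight \<mu> H))
                    + (\<Sum>H\<in>P. real (cnt x H) * weight \<mu> H)"
  have dG: "DERIV G 0 :> D"
  proof -
    have one: "DERIV (\<lambda>z. (1 + z) ^ c * w) 0 :> real c * w" for c :: nat and w :: real
      by (auto intro!: derivative_eq_intros)
    show ?thesis unfolding G_def[abs_def] D_def
      by (intro DERIV_add DERIV_sum DERIV_cmult one)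
  qed
  have Dval: "D = real m * b * Ob"
  proof -
    define h where "h t = (1 + t * b) ^ m * Ob - G t" for t
    have d1: "DERIV (\<lambda>z. (1 + z * b) ^ m * Ob) 0 :> real m * b * Ob"
      by (auto intro!: derivative_eq_intros)
    have dh: "DERIV h 0 :> (real m * b * Ob - D)"
      unfolding h_def[abs_def] by (intro DERIV_diff d1 dG)
    have "\<forall>y. \<bar>0 - y\<bar> < 1 \<longrightarrow> h 0 \<le> h y"
    proof (intro allI impI)
      fix y :: real assume y: "\<bar>0 - y\<bar> < 1"
      have "\<bar>y * b\<bar> = \<bar>y\<bar> * b" using b_nn by (simp add: abs_mult)
      moreover have "\<bar>y\<bar> * b \<le> \<bar>y\<bar>" using b_le by (simp add: mult_left_le)
      ultimately have "\<bar>y * b\<bar> < 1" using y by simp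
      then have "0 < 1 + y * b" by linarith
      then have "G y \<le> (1 + y * b) ^ m * Ob" using G_le y by auto
      then show "h 0 \<le> h y" unfolding h_def using G0 by simp
    qed
    from DERIV_local_min[OF dh _ this] show ?thesis by simp
  qed
  have obj_gen: "objective V m \<nu> = (\<Sum>H\<in>C. 2 * real m * weight \<nu> H) + (\<Sum>H\<in>P. weight \<nu> H)" for \<nu>
    unfolding objective_def beta_cycle_def beta_path_def C_def P_def by (simp add: sum_distrib_left)
  have Ob_pos: "0 < Ob"
  proof -
    obtain T where T: "T \<subseteq> V" "card T = m" "finite T"
      using obtain_subset_with_card_n[OF assms(3)] by blast
    obtain f where f: "bij_betw f {0..<m} T" using ex_bij_betw_nat_finite[OF T(3)] unfolding T(2) by blast
    have finj: "inj_on f {0..<m}" and fV: "f ` {0..<m} \<subseteq> V"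
      using f T(1) by (auto simp: bij_betw_def)
    define H0 where "H0 = {{f i, f (Suc i mod m)} | i. i < m}"
    have H0C: "H0 \<in> C" unfolding C_def cycle_copies_def H0_def using finj fV
      by (intro CollectI exI[of _ f] conjI refl) simp_all
    have "H0 \<noteq> {}" using Cprops[OF H0C] m3 by auto
    then have Ene: "edges V \<noteq> {}" using Cprops[OF H0C] by auto
    then have cardE: "0 < card (edges V)" using finE by (simp add: card_gt_0_iff)
    define u :: real where "u = 1 / card (edges V)"
    have upos: "0 < u" using cardE by (simp add: u_def)
    have "(\<lambda>_. u) \<in> Delta V" using upos cardE by (simp add: Delta_def u_def)
    then have "objective V m (\<lambda>_. u) \<le> Ob" using assms(5) Ob_def by auto
    moreover have "0 < objective V m (\<lambda>_. u)"
    proof -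
      have wu: "weight (\<lambda>_. u) H = u ^ card H" for H by (simp add: weight_def)
      have "0 < (\<Sum>H\<in>C. 2 * real m * weight (\<lambda>_. u) H)"
        by (rule sum_pos2[OF finC H0C]) (use upos m3 in \<open>auto simp: wu\<close>)
      moreover have "0 \<le> (\<Sum>H\<in>P. weight (\<lambda>_. u) H)" using upos by (auto simp: wu intro!: sum_nonneg)
      ultimately show ?thesis unfolding obj_gen by linarith
    qed
    ultimately show ?thesis by linarith
  qed
  show ?thesis
  proof (cases "b = 1")
    case True
    have "real m / 2 * b \<ge> 1" using True m3 by simp
    moreover have "0 \<le> 1 / (2 * Ob) * b * X" using True Ob_pos by (simp add: X_def)
    ultimately show ?thesis using True unfolding b_def[symmetric] Ob_def[symmetric] X_def[symmetric]
      by (simp add: power_0_left)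
  next
    case False
    then have b1: "b < 1" using b_le by simp
    have Gm1: "G (-1) \<le> (1 - b) ^ m * Ob" using G_le[of "-1"] b1 by simp
    define T1 where "T1 = (\<Sum>H\<in>P. if cnt x H = 1 then weight \<mu> H else 0)"
    have pt: "w \<le> 0 ^ c * w + real c * w / 2 + (if c = 1 then w / 2 else 0)" if "0 \<le> w" for w :: real and c :: nat
    proof -
      consider "c = 0" | "c = 1" | "2 \<le> c" by linarith
      then show ?thesis
      proof cases
        case 3
        then have "w \<le> real c * w / 2"
        proof -
          have "2 * w \<le> real c * w" using 3 that by (intro mult_right_mono) simp_all
          then show ?thesis by simp
        qed
        then show ?thesis using 3 by (simp add: power_0_left)
      qed simp_all
    qed
    have "Ob \<le> (\<Sum>H\<in>C. 2 * real m * (0 ^ cnt x H * weight \<mu> H + real (cnt x H) * weight \<mu> H / 2))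
             + (\<Sum>H\<in>P. 0 ^ cnt x H * weight \<mu> H + real (cnt x H) * weight \<mu> H / 2
                       + (if cnt x H = 1 then weight \<mu> H / 2 else 0))"
      unfolding Ob_def'
    proof (rule add_mono; rule sum_mono)
      fix H assume H: "H \<in> C"
      have "weight \<mu> H \<le> 0 ^ cnt x H * weight \<mu> H + real (cnt x H) * weight \<mu> H / 2"
        using pt[OF wnn, of H "cnt x H"] Cprops[OF H] by simp
      then show "2 * real m * weight \<mu> H \<le> 2 * real m * (0 ^ cnt x H * weight \<mu> H + real (cnt x H) * weight \<mu> H / 2)"
        by (rule mult_left_mono) simp
    next
      fix H assume H: "H \<in> P"
      show "weight \<mu> H \<le> 0 ^ cnt x H * weight \<mu> H + real (cnt x H) * weight \<mu> H / 2
                       + (if cnt x H = 1 then weight \<mu> H / 2 else 0)"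
        using pt[OF wnn, of H "cnt x H"] Pprops[OF H] by simp
    qed
    also have "\<dots> = G (-1) + D / 2 + T1 / 2"
    proof -
      have e1: "(\<Sum>H\<in>C. 2 * real m * (0 ^ cnt x H * weight \<mu> H + real (cnt x H) * weight \<mu> H / 2))
          = (\<Sum>H\<in>C. 2 * real m * (0 ^ cnt x H * weight \<mu> H)) + (\<Sum>H\<in>C. 2 * real m * (real (cnt x H) * weight \<mu> H)) / 2"
        by (simp add: sum.distrib sum_divide_distrib distrib_left)
      have e2: "(\<Sum>H\<in>P. 0 ^ cnt x H * weight \<mu> H + real (cnt x H) * weight \<mu> H / 2
                       + (if cnt x H = 1 then weight \<mu> H / 2 else 0))
          = (\<Sum>H\<in>P. 0 ^ cnt x H * weight \<mu> H) + (\<Sum>H\<in>P. real (cnt x H) * weight \<mu> H) / 2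
            + (\<Sum>H\<in>P. if cnt x H = 1 then weight \<mu> H else 0) / 2"
        by (simp add: sum.distrib sum_divide_distrib if_distrib[of "\<lambda>z. z / 2"] cong: if_cong)
      show ?thesis unfolding e1 e2 G_def D_def T1_def by simp
    qed
    finally have main: "Ob \<le> G (-1) + D / 2 + T1 / 2" .
    have T1le: "T1 \<le> b * X"
    proof -
      define DL where "DL = dl (V - {x}) m"
      have finDL: "finite DL" unfolding DL_def by (rule finite_dl) (use finV in simp)
      have DLprops: "distinct (x # ys) \<and> set (x # ys) \<subseteq> V" if "ys \<in> DL" for ys
        using that xV unfolding DL_def dl_def by auto
      have peE: "pe (x # ys) \<subseteq> edges V" if "ys \<in> DL" for ys
        using DLprops[OF that] pe_edges by blast
      have "T1 = sum (weight \<mu>) {H \<in> P. cnt x H = 1}"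
        unfolding T1_def by (rule sum.inter_filter[OF finP, symmetric])
      also have "\<dots> \<le> sum (weight \<mu>) ((\<lambda>ys. pe (x # ys)) ` DL)"
      proof (rule sum_mono2)
        show "finite ((\<lambda>ys. pe (x # ys)) ` DL)" using finDL by simp
        show "{H \<in> P. cnt x H = 1} \<subseteq> (\<lambda>ys. pe (x # ys)) ` DL"
          using Pprops unfolding DL_def by blast
        show "0 \<le> weight \<mu> H" if "H \<in> (\<lambda>ys. pe (x # ys)) ` DL - {H \<in> P. cnt x H = 1}" for H
          using that peE wnn by blast
      qed
      also have "\<dots> \<le> (\<Sum>ys\<in>DL. weight \<mu> (pe (x # ys)))"
        using sum_image_le[OF finDL, of "weight \<mu>" "\<lambda>ys. pe (x # ys)"] peE wnn by (simp add: o_def)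
      also have "\<dots> = (\<Sum>ys\<in>DL. pw \<mu> (x # ys))"
        by (rule sum.cong[OF refl]) (use DLprops weight_pe in blast)
      also have "\<dots> = Q \<mu> V x m" unfolding DL_def by (rule sum_dl_Q[OF finV])
      also have "Q \<mu> V x m = (\<Sum>v\<in>V - {x}. \<mu> {x, v} * Q \<mu> (V - {x}) v (m - 1))"
        using m3 by (cases m) auto
      also have "\<dots> \<le> (\<Sum>v\<in>V - {x}. \<mu> {x, v} * (mass \<mu> (V - {x}) / real (m - 1)) ^ (m - 1))"
      proof (rule sum_mono, rule mult_left_mono)
        fix v assume v: "v \<in> V - {x}"
        have "\<forall>e\<in>edges (V - {x}). 0 \<le> \<mu> e" using mu_nn edges_mono[of "V - {x}" V] by auto
        then show "Q \<mu> (V - {x}) v (m - 1) \<le> (mass \<mu> (V - {x}) / real (m - 1)) ^ (m - 1)"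
          using Q_bound[of "V - {x}" v] v finV by auto
        show "0 \<le> \<mu> {x, v}" using v mu_nn edges_split(1)[OF finV xV] by auto
      qed
      also have "\<dots> = b * (mass \<mu> (V - {x}) / real (m - 1)) ^ (m - 1)"
        unfolding b_def mubar_def by (simp add: sum_distrib_right)
      also have "mass \<mu> (V - {x}) = 1 - b"
        using mass_split[OF finV xV, of \<mu>] mu_sum unfolding mass_def b_def mubar_def by simp
      also have "real (m - 1) = real m - 1" using m3 by simp
      finally show ?thesis unfolding X_def .
    qed
    have "Ob * 1 \<le> Ob * (real m / 2 * b + (1 - b) ^ m + 1 / (2 * Ob) * b * X)"
    proof -
      have "Ob * (real m / 2 * b + (1 - b) ^ m + 1 / (2 * Ob) * b * X)
          = real m * b * Ob / 2 + (1 - b) ^ m * Ob + b * X / 2"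
        using Ob_pos by (simp add: field_simps)
      then show ?thesis using main Gm1 Dval T1le by simp
    qed
    then have "1 \<le> real m / 2 * b + (1 - b) ^ m + 1 / (2 * Ob) * b * X"
      using Ob_pos by (simp only: mult_le_cancel_left_pos)
    then show ?thesis unfolding b_def Ob_def X_def .
  qed
qed

end
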